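(* For every integer $n \ge 7$, the integer $\left\lfloor n^2/5 \right\rfloor$ is composite. *)

theory Defs
  imports Complex_Main "HOL-Computational_Algebra.Primes"
begin

definition composite :: "int \<Rightarrow> bool" where
  "composite m \<longleftrightarrow> m > 1 \<and> \<not> prime m"

end

theory Submission
  imports Defs
begin

lemma comp_of_prod:
  fixes a b :: int
  assumes "a \<ge> 2" "b \<ge> 2"
  shows "composite (a * b)"
proof -
  have "a * b \<ge> 2 * 2" using assms by (intro mult_mono) auto
  moreover have "\<not> prime (a * b)"
  proof
    assume "prime (a * b)"
    then have "is_unit a \<or> is_unit b" using prime_elem_imp_irreducible irreducibleD
      by (metis prime_def)
    then show False using assms by auto
  qed
  ultimately show ?thesis unfolding composite_def by auto
qed

theorem mainTheorem1:
  fixes n :: int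
  assumes "n \<ge> 7"
  shows "composite (floor ((real_of_int n)^2 / 5))"
proof -
  have fl: "floor ((real_of_int n)^2 / 5) = n^2 div 5"
    by (metis floor_divide_of_int_eq of_int_numeral of_int_power)
  define k where "k = n div 5"
  define r where "r = n mod 5"
  have n: "n = 5 * k + r" unfolding k_def r_def by simp
  have r: "0 \<le> r" "r < 5" unfolding r_def by auto
  have sq: "n^2 = 5 * (5*k^2 + 2*k*r) + r^2" unfolding n by (simp add: power2_eq_square algebra_simps)
  have "r = 0 \<or> r = 1 \<or> r = 2 \<or> r = 3 \<or> r = 4" using r by auto
  then have "composite (n^2 div 5)"
  proof (elim disjE)
    assume "r = 0"
    then have "n^2 div 5 = k * (5*k)" using sq by (simp add: power2_eq_square)
    moreover have "k \<ge> 2" using assms n \<open>r = 0\<close> by auto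
    ultimately show ?thesis using comp_of_prod by simp
  next
    assume "r = 1"
    then have "n^2 div 5 = k * (5*k+2)" using sq by (simp add: power2_eq_square algebra_simps)
    moreover have "k \<ge> 2" using assms n \<open>r = 1\<close> by auto
    ultimately show ?thesis using comp_of_prod by simp
  next
    assume "r = 2"
    then have e: "n^2 div 5 = k * (5*k+4)" using sq by (simp add: power2_eq_square algebra_simps)
    have "k \<ge> 1" using assms n \<open>r = 2\<close> by auto
    show ?thesis
    proof (cases "k = 1")
      case True
      then have "n^2 div 5 = 3 * 3" using e by simp
      then show ?thesis using comp_of_prod[of 3 3] by simp
    next
      case False
      then show ?thesis using e \<open>k \<ge> 1\<close> comp_of_prod by simp
    qed
  next
    assume "r = 3"
    then have "n^2 div 5 = (k+1) * (5*k+1)" using sq by (simp add: power2_eq_square algebra_simps)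
    moreover have "k \<ge> 1" using assms n \<open>r = 3\<close> by auto
    ultimately show ?thesis using comp_of_prod by simp
  next
    assume "r = 4"
    then have "n^2 div 5 = (k+1) * (5*k+3)" using sq by (simp add: power2_eq_square algebra_simps)
    moreover have "k \<ge> 1" using assms n \<open>r = 4\<close> by auto
    ultimately show ?thesis using comp_of_prod by simp
  qed
  then show ?thesis using fl by simp
qed

end
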